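(* Let $M$ be a matroid flock on a finite set $E$, let $\alpha\in\mathbb{Z}^E$ and let $I\subseteq J\subseteq E$. Then $r_\alpha(J)=r_\alpha(I)+r_{\alpha+e_I}(J\setminus I)$.
   Context: $e_I:=\sum_{i\in I}e_i$ ($e_i$ unit vectors in $\mathbb{Z}^E$), $\mathbf{1}:=e_E$. A matroid flock of rank $d$ on $E$ is a map $M$ assigning to each $\alpha\in\mathbb{Z}^E$ a matroid $M_\alpha$ on $E$ of rank $d$ with (MF1) $M_\alpha/i=M_{\alpha+e_i}\setminus i$ for all $\alpha$, $i\in E$ (contraction, deletion); and (MF2) $M_\alpha=M_{\alpha+\mathbf{1}}$ for all $\alpha$. $r_\alpha$ denotes the rank function of $M_\alpha$. *)

theory Defs
  imports Main "HOL-Library.Function_Algebras"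
begin

definition matroid :: "'a set \<Rightarrow> 'a set set \<Rightarrow> bool" where
  "matroid E Ind \<longleftrightarrow> finite E \<and> Ind \<subseteq> Pow E \<and> {} \<in> Ind
     \<and> (\<forall>X Y. X \<in> Ind \<and> Y \<subseteq> X \<longrightarrow> Y \<in> Ind)
     \<and> (\<forall>X Y. X \<in> Ind \<and> Y \<in> Ind \<and> card X < card Y \<longrightarrow> (\<exists>y\<in>Y - X. insert y X \<in> Ind))"

definition rk :: "'a set set \<Rightarrow> 'a set \<Rightarrow> nat" where
  "rk Ind X = Max {card Y | Y. Y \<subseteq> X \<and> Y \<in> Ind}"

definition mdelete :: "'a set set \<Rightarrow> 'a \<Rightarrow> 'a set set" where
  "mdelete Ind i = {X \<in> Ind. i \<notin> X}"

definition mcontract :: "'a set set \<Rightarrow> 'a \<Rightarrow> 'a set set" where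
  "mcontract Ind i = (if {i} \<in> Ind then {X. i \<notin> X \<and> insert i X \<in> Ind}
                      else {X \<in> Ind. i \<notin> X})"

definition evec :: "'a set \<Rightarrow> 'a \<Rightarrow> int" where
  "evec I = (\<lambda>x. if x \<in> I then 1 else 0)"

definition ZE :: "'a set \<Rightarrow> ('a \<Rightarrow> int) set" where
  "ZE E = {\<alpha>. \<forall>x. x \<notin> E \<longrightarrow> \<alpha> x = 0}"

definition matroid_flock :: "'a set \<Rightarrow> nat \<Rightarrow> (('a \<Rightarrow> int) \<Rightarrow> 'a set set) \<Rightarrow> bool" where
  "matroid_flock E d M \<longleftrightarrow>
     (\<forall>\<alpha>\<in>ZE E. matroid E (M \<alpha>) \<and> rk (M \<alpha>) E = d)
   \<and> (\<forall>\<alpha>\<in>ZE E. \<forall>i\<in>E. mcontract (M \<alpha>) i = mdelete (M (\<alpha> + evec {i})) i)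
   \<and> (\<forall>\<alpha>\<in>ZE E. M \<alpha> = M (\<alpha> + evec E))"

end

theory Submission
  imports Defs
begin

lemma mat_fin: "matroid E Ind \<Longrightarrow> finite E" unfolding matroid_def by (elim conjE)
lemma mat_pow: "matroid E Ind \<Longrightarrow> Ind \<subseteq> Pow E" unfolding matroid_def by (elim conjE)
lemma mat_empty: "matroid E Ind \<Longrightarrow> {} \<in> Ind" unfolding matroid_def by (elim conjE)
lemma mat_down: "matroid E Ind \<Longrightarrow> X \<in> Ind \<Longrightarrow> Y \<subseteq> X \<Longrightarrow> Y \<in> Ind"
  unfolding matroid_def by (elim conjE) blast
lemma mat_aug: "matroid E Ind \<Longrightarrow> X \<in> Ind \<Longrightarrow> Y \<in> Ind \<Longrightarrow> card X < card Y \<Longrightarrow> \<exists>y\<in>Y - X. insert y X \<in> Ind"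
  unfolding matroid_def by (elim conjE) blast

lemma rk_charI:
  assumes "\<And>Y. Y \<subseteq> X \<Longrightarrow> Y \<in> Ind \<Longrightarrow> card Y \<le> n"
    and "Y0 \<subseteq> X" "Y0 \<in> Ind" "card Y0 = n"
  shows "rk Ind X = n"
proof -
  let ?S = "{card Y | Y. Y \<subseteq> X \<and> Y \<in> Ind}"
  have "?S \<subseteq> {..n}" using assms(1) by auto
  hence f: "finite ?S" by (rule finite_subset) simp
  have "n \<in> ?S" using assms(2-4) by auto
  show ?thesis unfolding rk_def
    by (rule Max_eqI[OF f]) (use assms in auto)
qed

lemma rk_fin:
  assumes "matroid E Ind"
  shows "finite {card Y | Y. Y \<subseteq> X \<and> Y \<in> Ind}"
proof -
  have "Ind \<subseteq> Pow E" "finite E" using mat_pow[OF assms] mat_fin[OF assms] by auto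
  hence "finite Ind" by (meson finite_Pow_iff finite_subset)
  moreover have "{card Y | Y. Y \<subseteq> X \<and> Y \<in> Ind} \<subseteq> card ` Ind" by auto
  ultimately show ?thesis by (meson finite_imageI finite_subset)
qed

lemma rk_le:
  assumes "matroid E Ind" "Y \<subseteq> X" "Y \<in> Ind"
  shows "card Y \<le> rk Ind X"
  unfolding rk_def using rk_fin[OF assms(1)] assms(2,3) by (intro Max_ge) auto

lemma rk_obtain:
  assumes "matroid E Ind"
  obtains Y where "Y \<subseteq> X" "Y \<in> Ind" "card Y = rk Ind X"
proof -
  have "{} \<in> Ind" using mat_empty[OF assms] .
  hence ne: "{card Y | Y. Y \<subseteq> X \<and> Y \<in> Ind} \<noteq> {}" by blast
  have "rk Ind X \<in> {card Y | Y. Y \<subseteq> X \<and> Y \<in> Ind}"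
    unfolding rk_def by (rule Max_in[OF rk_fin[OF assms] ne])
  then obtain Y where "Y \<subseteq> X" "Y \<in> Ind" "card Y = rk Ind X" by auto
  thus ?thesis using that by blast
qed

lemma augment:
  assumes m: "matroid E Ind"
  shows "X \<in> Ind \<Longrightarrow> Z \<in> Ind \<Longrightarrow> card X \<le> card Z \<Longrightarrow> card Z - card X = k \<Longrightarrow>
    \<exists>W. X \<subseteq> W \<and> W \<subseteq> X \<union> Z \<and> W \<in> Ind \<and> card W = card Z"
proof (induction k arbitrary: X)
  case 0
  then show ?case by (intro exI[of _ X]) auto
next
  case (Suc k)
  then have "card X < card Z" by auto
  then obtain y where y: "y \<in> Z - X" "insert y X \<in> Ind"
    using mat_aug[OF m Suc.prems(1,2)] by blast
  have "finite X" using mat_pow[OF m] mat_fin[OF m] Suc.prems(1)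
    by (meson PowD finite_subset subsetD)
  hence c: "card (insert y X) = card X + 1" using y by simp
  obtain W where "insert y X \<subseteq> W" "W \<subseteq> insert y X \<union> Z" "W \<in> Ind" "card W = card Z"
    using Suc.IH[OF y(2) Suc.prems(2)] c Suc.prems by fastforce
  then show ?case using y by (intro exI[of _ W]) auto
qed

lemma single:
  assumes m: "matroid E Ind" and iK: "i \<in> K" and KE: "K \<subseteq> E"
  shows "rk Ind K = rk Ind {i} + rk (mcontract Ind i) (K - {i})"
proof (cases "{i} \<in> Ind")
  case False
  have e: "{} \<in> Ind" using mat_empty[OF m] .
  have r0: "rk Ind {i} = 0"
    by (rule rk_charI[of _ _ _ "{}"]) (use False e in \<open>auto simp: subset_singleton_iff\<close>)
  have down: "\<And>X Y. X \<in> Ind \<Longrightarrow> Y \<subseteq> X \<Longrightarrow> Y \<in> Ind" using mat_down[OF m] by blast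
  obtain Z where Z: "Z \<subseteq> K" "Z \<in> Ind" "card Z = rk Ind K" using rk_obtain[OF m] by blast
  have "i \<notin> Z" using Z False down by blast
  have "rk (mcontract Ind i) (K - {i}) = rk Ind K"
  proof (rule rk_charI[of _ _ _ Z])
    fix Y assume "Y \<subseteq> K - {i}" "Y \<in> mcontract Ind i"
    thus "card Y \<le> rk Ind K" using False rk_le[OF m, of Y K] unfolding mcontract_def by auto
  qed (use Z \<open>i \<notin> Z\<close> False in \<open>auto simp: mcontract_def\<close>)
  thus ?thesis using r0 by simp
next
  case True
  have r1: "rk Ind {i} = 1"
  proof (rule rk_charI[of _ _ _ "{i}"])
    fix Y assume "Y \<subseteq> {i}" thus "card Y \<le> 1"
      using card_mono[of "{i}" Y] by simp
  qed (use True in auto)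
  obtain Z where Z: "Z \<subseteq> K" "Z \<in> Ind" "card Z = rk Ind K" using rk_obtain[OF m] by blast
  have "1 \<le> rk Ind K" using rk_le[OF m, of "{i}" K] True iK by auto
  hence "card {i} \<le> card Z" using Z by simp
  then obtain W where W: "{i} \<subseteq> W" "W \<subseteq> {i} \<union> Z" "W \<in> Ind" "card W = card Z"
    using augment[OF m True Z(2)] by blast
  have finE: "finite E" using mat_fin[OF m] .
  have "rk (mcontract Ind i) (K - {i}) = rk Ind K - 1"
  proof (rule rk_charI[of _ _ _ "W - {i}"])
    fix Y assume Y: "Y \<subseteq> K - {i}" "Y \<in> mcontract Ind i"
    hence "insert i Y \<in> Ind" "i \<notin> Y" using True unfolding mcontract_def by auto
    moreover have "Y \<subseteq> E" using Y KE by blast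
    hence "finite Y" using finE by (rule finite_subset)
    ultimately show "card Y \<le> rk Ind K - 1"
    proof -
      have "Y \<subseteq> K" using Y by blast
      hence "insert i Y \<subseteq> K" using iK by blast
      thus ?thesis using rk_le[OF m, of "insert i Y" K] \<open>insert i Y \<in> Ind\<close> \<open>i \<notin> Y\<close> \<open>finite Y\<close> by simp
    qed
  next
    show "W - {i} \<subseteq> K - {i}" using W Z iK by auto
    have "insert i (W - {i}) = W" using W by blast
    thus "W - {i} \<in> mcontract Ind i" using W True unfolding mcontract_def by simp
    have "W \<subseteq> E" using W Z KE iK by blast
    hence "finite W" using finE by (rule finite_subset)
    thus "card (W - {i}) = rk Ind K - 1" using W Z by auto
  qed
  thus ?thesis using r1 \<open>1 \<le> rk Ind K\<close> by simp
qed

lemma rk_delete: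
  assumes "i \<notin> X"
  shows "rk (mdelete Ind i) X = rk Ind X"
proof -
  have "{card Y | Y. Y \<subseteq> X \<and> Y \<in> mdelete Ind i} = {card Y | Y. Y \<subseteq> X \<and> Y \<in> Ind}"
    using assms unfolding mdelete_def by blast
  thus ?thesis unfolding rk_def by simp
qed

lemma rk_empty:
  assumes "matroid E Ind" shows "rk Ind {} = 0"
  by (rule rk_charI[of _ _ _ "{}"]) (use mat_empty[OF assms] in auto)

lemma ZE_add: "\<alpha> \<in> ZE E \<Longrightarrow> I \<subseteq> E \<Longrightarrow> \<alpha> + evec I \<in> ZE E"
  unfolding ZE_def evec_def by auto

lemma evec_insert: "i \<notin> I \<Longrightarrow> evec (insert i I) = evec I + evec {i}"
  unfolding evec_def by (auto simp: fun_eq_iff)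

lemma evec_empty: "evec {} = 0"
  unfolding evec_def by (auto simp: fun_eq_iff)

lemma main_ind:
  assumes fl: "matroid_flock E d M" and fI: "finite I"
  shows "\<forall>\<alpha>\<in>ZE E. \<forall>J. I \<subseteq> J \<and> J \<subseteq> E \<longrightarrow>
     rk (M \<alpha>) J = rk (M \<alpha>) I + rk (M (\<alpha> + evec I)) (J - I)"
  using fI
proof (induction I rule: finite_induct)
  case empty
  show ?case
  proof (intro ballI allI impI)
    fix \<alpha> J assume a: "\<alpha> \<in> ZE E" and J: "{} \<subseteq> J \<and> J \<subseteq> E"
    have "matroid E (M \<alpha>)" using fl a unfolding matroid_flock_def by blast
    hence "rk (M \<alpha>) {} = 0" by (rule rk_empty)
    thus "rk (M \<alpha>) J = rk (M \<alpha>) {} + rk (M (\<alpha> + evec {})) (J - {})"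
      by (simp add: evec_empty)
  qed
next
  case (insert i I')
  show ?case
  proof (intro ballI allI impI)
    fix \<alpha> J assume a: "\<alpha> \<in> ZE E" and J: "insert i I' \<subseteq> J \<and> J \<subseteq> E"
    define \<beta> where "\<beta> = \<alpha> + evec I'"
    have b: "\<beta> \<in> ZE E" unfolding \<beta>_def using ZE_add[OF a] J by auto
    have mb: "matroid E (M \<beta>)" using fl b unfolding matroid_flock_def by auto
    have iE: "i \<in> E" using J by auto
    have con: "mcontract (M \<beta>) i = mdelete (M (\<beta> + evec {i})) i"
      using fl b iE unfolding matroid_flock_def by auto
    have be: "\<beta> + evec {i} = \<alpha> + evec (insert i I')"
      unfolding \<beta>_def using evec_insert[OF insert(2)] by (simp add: add.assoc)
    have sg: "\<And>K. i \<in> K \<Longrightarrow> K \<subseteq> E \<Longrightarrow>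
        rk (M \<beta>) K = rk (M \<beta>) {i} + rk (M (\<alpha> + evec (insert i I'))) (K - {i})"
    proof -
      fix K assume "i \<in> K" "K \<subseteq> E"
      have "rk (M \<beta>) K = rk (M \<beta>) {i} + rk (mcontract (M \<beta>) i) (K - {i})"
        by (rule single[OF mb \<open>i \<in> K\<close> \<open>K \<subseteq> E\<close>])
      also have "rk (mcontract (M \<beta>) i) (K - {i}) = rk (M (\<beta> + evec {i})) (K - {i})"
        unfolding con by (rule rk_delete) simp
      finally show "rk (M \<beta>) K = rk (M \<beta>) {i} + rk (M (\<alpha> + evec (insert i I'))) (K - {i})"
        unfolding be .
    qed
    have h1: "rk (M \<alpha>) J = rk (M \<alpha>) I' + rk (M \<beta>) (J - I')"
    proof -
      have "I' \<subseteq> J \<and> J \<subseteq> E" using J by auto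
      thus ?thesis using insert.IH a unfolding \<beta>_def by blast
    qed
    have h2: "rk (M \<alpha>) (insert i I') = rk (M \<alpha>) I' + rk (M \<beta>) {i}"
    proof -
      have "I' \<subseteq> insert i I' \<and> insert i I' \<subseteq> E" using J by auto
      hence "rk (M \<alpha>) (insert i I') = rk (M \<alpha>) I' + rk (M \<beta>) (insert i I' - I')"
        using insert.IH a unfolding \<beta>_def by blast
      moreover have "insert i I' - I' = {i}" using insert(2) by auto
      ultimately show ?thesis by simp
    qed
    have h3: "rk (M \<beta>) (J - I') = rk (M \<beta>) {i} + rk (M (\<alpha> + evec (insert i I'))) (J - I' - {i})"
      using sg[of "J - I'"] J insert(2) by auto
    have "J - I' - {i} = J - insert i I'" by auto
    thus "rk (M \<alpha>) J = rk (M \<alpha>) (insert i I') + rk (M (\<alpha> + evec (insert i I'))) (J - insert i I')"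
      using h1 h2 h3 by simp
  qed
qed

theorem mainTheorem9:
  fixes E :: "'a set" and d :: nat and M :: "('a \<Rightarrow> int) \<Rightarrow> 'a set set"
    and \<alpha> :: "'a \<Rightarrow> int" and I J :: "'a set"
  assumes "finite E" and "matroid_flock E d M" and "\<alpha> \<in> ZE E"
    and "I \<subseteq> J" and "J \<subseteq> E"
  shows "rk (M \<alpha>) J = rk (M \<alpha>) I + rk (M (\<alpha> + evec I)) (J - I)"
proof -
  have "finite I" using assms by (meson finite_subset)
  thus ?thesis using main_ind[OF assms(2)] assms by blast
qed

end
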